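(* Fix a directed edge set $\mathcal{E}$ and a randomized design with $0<\mathbb{E}[z_i]<1$ for all $i$. Suppose there exist reals $\rho_i\in[0,1)$, $i\in[n]$, such that for every $(k,i)\in\mathcal{E}$, $\mathbb{P}(z_k=1)>0$ and $\mathbb{P}(z_i=1\mid z_k=1)=\rho_i$. Then under the heterogeneous additive network effects model the estimator \[\widehat{\mathrm{ATE}}_{-\alpha}=\frac1n\sum_{i\in[n]}\Big(\frac{z_i}{\mathbb{E}[z_i]}-\frac{(1-z_i)\rho_i}{\mathbb{E}[z_i](1-\rho_i)}\Big)\big(Y_i({\bf z})-\alpha_i\big)\] is unbiased for $\mathrm{ATE}$.
   Context: Population $[n]$; random treatment vector ${\bf z}\in\{0,1\}^n$ drawn from a randomized design. Heterogeneous additive network effects model: $Y_i({\bf z})=\alpha_i+\beta_iz_i+\sum_{k\in[n]}\gamma_{ki}z_k$ with deterministic real parameters, $\gamma_{ki}=0$ unless $(k,i)\in\mathcal{E}$, where $\mathcal{E}$ is a set of ordered pairs $(k,i)$, $k\neq i$; $\alpha_i=Y_i({\bf 0})$. $\mathrm{ATE}=\frac1n\sum_i\beta_i$. (For $i$ with no incoming edges, $\rho_i\in[0,1)$ is arbitrary.) *)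

theory Defs
  imports "HOL-Probability.Probability"
begin

text \<open>A randomized design on population {0..<n} is a pmf over treatment sets
  (the set of treated units); z_i(S) = 1 iff i in S.\<close>

definition zv :: "nat set \<Rightarrow> nat \<Rightarrow> real" where
  "zv S i = (if i \<in> S then 1 else 0)"

definition Ymodel :: "(nat \<Rightarrow> real) \<Rightarrow> (nat \<Rightarrow> real) \<Rightarrow> (nat \<Rightarrow> nat \<Rightarrow> real)
    \<Rightarrow> nat \<Rightarrow> nat set \<Rightarrow> nat \<Rightarrow> real" where
  "Ymodel \<alpha> \<beta> \<gamma> n S i = \<alpha> i + \<beta> i * zv S i + (\<Sum>k<n. \<gamma> k i * zv S k)"

definition ATE :: "nat \<Rightarrow> (nat \<Rightarrow> real) \<Rightarrow> real" where
  "ATE n \<beta> = (\<Sum>i<n. \<beta> i) / real n"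

definition ATE_hat_minus_alpha :: "nat set pmf \<Rightarrow> (nat \<Rightarrow> real) \<Rightarrow> (nat \<Rightarrow> real)
    \<Rightarrow> (nat \<Rightarrow> real) \<Rightarrow> (nat \<Rightarrow> nat \<Rightarrow> real) \<Rightarrow> nat \<Rightarrow> nat set \<Rightarrow> real" where
  "ATE_hat_minus_alpha D \<rho> \<alpha> \<beta> \<gamma> n S =
     (\<Sum>i<n. (zv S i / measure_pmf.expectation D (\<lambda>T. zv T i)
              - (1 - zv S i) * \<rho> i / (measure_pmf.expectation D (\<lambda>T. zv T i) * (1 - \<rho> i)))
            * (Ymodel \<alpha> \<beta> \<gamma> n S i - \<alpha> i)) / real n"

end

theory Submission
  imports Defs
begin

lemma zv_ind: "zv S i = indicator {S. i \<in> S} S" by (simp add: zv_def indicator_def)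

lemma Ez: "measure_pmf.expectation D (\<lambda>S. zv S i) = measure_pmf.prob D {S. i \<in> S}"
  by (simp add: zv_ind)

lemma Ezz: "measure_pmf.expectation D (\<lambda>S. zv S i * zv S k) = measure_pmf.prob D {S. i \<in> S \<and> k \<in> S}"
proof -
  have "(\<lambda>S. zv S i * zv S k) = indicator {S. i \<in> S \<and> k \<in> S}" by (auto simp: zv_def indicator_def)
  thus ?thesis by simp
qed

theorem theorem4:
  fixes n :: nat and D :: "nat set pmf" and E :: "(nat \<times> nat) set"
    and \<alpha> \<beta> \<rho> :: "nat \<Rightarrow> real" and \<gamma> :: "nat \<Rightarrow> nat \<Rightarrow> real"
  assumes design: "set_pmf D \<subseteq> Pow {..<n}"
    and E_sub: "E \<subseteq> {..<n} \<times> {..<n}"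
    and E_irrefl: "\<forall>(k, i) \<in> E. k \<noteq> i"
    and prop_pos: "\<forall>i<n. 0 < measure_pmf.expectation D (\<lambda>S. zv S i)"
    and prop_lt1: "\<forall>i<n. measure_pmf.expectation D (\<lambda>S. zv S i) < 1"
    and rho_range: "\<forall>i<n. 0 \<le> \<rho> i \<and> \<rho> i < 1"
    and edge_pos: "\<forall>(k, i) \<in> E. 0 < measure_pmf.prob D {S. k \<in> S}"
    and edge_cond: "\<forall>(k, i) \<in> E.
          measure_pmf.prob D {S. i \<in> S \<and> k \<in> S} / measure_pmf.prob D {S. k \<in> S} = \<rho> i"
    and gamma_E: "\<forall>k<n. \<forall>i<n. (k, i) \<notin> E \<longrightarrow> \<gamma> k i = 0"
  shows "measure_pmf.expectation D (ATE_hat_minus_alpha D \<rho> \<alpha> \<beta> \<gamma> n) = ATE n \<beta>"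
proof -
  have fin: "finite (set_pmf D)" using design by (meson finite_Pow_iff finite_lessThan finite_subset)
  have int: "\<And>f::nat set \<Rightarrow> real. integrable (measure_pmf D) f" using fin by (simp add: integrable_measure_pmf_finite)
  define p where "p i = measure_pmf.expectation D (\<lambda>T. zv T i)" for i
  define w where "w i S = zv S i / p i - (1 - zv S i) * \<rho> i / (p i * (1 - \<rho> i))" for i S
  have ex: "ATE_hat_minus_alpha D \<rho> \<alpha> \<beta> \<gamma> n S =
     (\<Sum>i<n. \<beta> i * (zv S i / p i) + (\<Sum>k<n. \<gamma> k i * (w i S * zv S k))) / real n" for S
    unfolding ATE_hat_minus_alpha_def p_def[symmetric] w_def[symmetric] Ymodel_def
    by (intro arg_cong[where f="\<lambda>x. x / real n"] sum.cong refl)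
       (auto simp: algebra_simps sum_distrib_left w_def zv_def sum_negf sum_divide_distrib[symmetric])
  have E1: "measure_pmf.expectation D (\<lambda>S. zv S i / p i) = 1" if "i < n" for i
    using prop_pos that by (simp add: p_def less_imp_neq[symmetric])
  have E2: "\<gamma> k i * measure_pmf.expectation D (\<lambda>S. w i S * zv S k) = 0" if "i < n" "k < n" for i k
  proof (cases "(k, i) \<in> E")
    case False thus ?thesis using gamma_E that by simp
  next
    case True
    define q where "q = measure_pmf.prob D {S. k \<in> S}"
    define r where "r = measure_pmf.prob D {S. i \<in> S \<and> k \<in> S}"
    have q: "q > 0" using edge_pos True by (auto simp: q_def)
    have r: "r = \<rho> i * q" using edge_cond True q unfolding q_def r_def by (auto simp: field_simps)
    have pp: "p i > 0" using prop_pos that by (simp add: p_def less_imp_neq[symmetric])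
    have rr: "\<rho> i < 1" using rho_range that by simp
    have "(\<lambda>S. w i S * zv S k) = (\<lambda>S. (1 / p i + \<rho> i / (p i * (1 - \<rho> i))) * (zv S i * zv S k)
               - \<rho> i / (p i * (1 - \<rho> i)) * zv S k)"
      by (auto simp: w_def algebra_simps add_divide_distrib diff_divide_distrib)
    hence "measure_pmf.expectation D (\<lambda>S. w i S * zv S k) =
        (1 / p i + \<rho> i / (p i * (1 - \<rho> i))) * r - \<rho> i / (p i * (1 - \<rho> i)) * q"
      using int by (simp add: Ezz Ez r_def q_def)
    also have "\<dots> = 0" using pp rr unfolding r by (simp add: field_simps)
    finally show ?thesis by simp
  qed
  have "measure_pmf.expectation D (ATE_hat_minus_alpha D \<rho> \<alpha> \<beta> \<gamma> n)
      = (\<Sum>i<n. \<beta> i * measure_pmf.expectation D (\<lambda>S. zv S i / p i)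
            + (\<Sum>k<n. \<gamma> k i * measure_pmf.expectation D (\<lambda>S. w i S * zv S k))) / real n"
    unfolding ex using int by (simp add: Bochner_Integration.integral_sum)
  also have "\<dots> = (\<Sum>i<n. \<beta> i) / real n"
    by (intro arg_cong[where f="\<lambda>x. x / real n"] sum.cong refl)
       (simp only: E1 lessThan_iff mult_1_right, simp add: E2)
  finally show ?thesis by (simp add: ATE_def)
qed

end
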